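(* There is an absolute constant $A>0$ such that for every $r\ge1$ there exists a function $h:\mathbb{R}\to\mathbb{R}$ with $h(x)=x$ for all $x\in[-r,r]$, such that $$\int_{\mathbb{R}}|\hat h(\omega)|\,d\omega\le A r^{3/2}\quad\text{and}\quad\int_{\mathbb{R}}|\omega|\,|\hat h(\omega)|\,d\omega\le A r^{1/2}.$$
   Context: Fourier transform: $\hat h(\omega)=\frac{1}{2\pi}\int_{\mathbb{R}}h(x)e^{-i\omega x}dx$. *)

theory Defs
  imports "HOL-Analysis.Analysis"
begin

definition fourier :: "(real \<Rightarrow> real) \<Rightarrow> real \<Rightarrow> complex" where
  "fourier h \<omega> = complex_of_real (1 / (2 * pi)) *
     (LINT x|lborel. complex_of_real (h x) * exp (- (\<i> * complex_of_real (\<omega> * x))))"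

end

theory Submission
  imports Defs
begin


definition comb :: "real \<Rightarrow> (real \<Rightarrow> real) \<Rightarrow> real \<Rightarrow> real" where
  "comb r f x = 3*(f(x+r) - f(x-r)) - 8*(f(x+2*r) - f(x-2*r)) + 7*(f(x+3*r) - f(x-3*r)) - 2*(f(x+4*r) - f(x-4*r))"

definition P3 :: "real \<Rightarrow> real" where "P3 y = (max 0 y)^3"
definition P2 :: "real \<Rightarrow> real" where "P2 y = (max 0 y)^2"
definition P1 :: "real \<Rightarrow> real" where "P1 y = max 0 y"
definition P0 :: "real \<Rightarrow> real" where "P0 y = (if y > 0 then 1 else 0)"

lemma deriv_local:
  fixes f g :: "real \<Rightarrow> real"
  assumes "y \<noteq> 0" "\<And>z. z > 0 \<Longrightarrow> f z = g z" "\<And>z. z < 0 \<Longrightarrow> f z = 0"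
    "y > 0 \<Longrightarrow> (g has_real_derivative D) (at y)" "y < 0 \<Longrightarrow> D = 0"
  shows "(f has_real_derivative D) (at y)"
proof (cases "y > 0")
  case True
  have "(g has_real_derivative D) (at y)" using assms True by auto
  then show ?thesis
    by (rule has_field_derivative_transform_within_open[where S="{0<..}"]) (use True assms in auto)
next
  case False
  hence y: "y < 0" using assms by auto
  have "((\<lambda>_. 0) has_real_derivative D) (at y)" using assms y by simp
  then show ?thesis
    by (rule has_field_derivative_transform_within_open[where S="{..<0}"]) (use y assms in auto)
qed

lemma dP3: "y \<noteq> 0 \<Longrightarrow> (P3 has_real_derivative 3 * P2 y) (at y)"
  by (rule deriv_local[where g="\<lambda>z. z^3"]) (auto simp: P3_def P2_def intro!: derivative_eq_intros)
lemma dP2: "y \<noteq> 0 \<Longrightarrow> (P2 has_real_derivative 2 * P1 y) (at y)"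
  by (rule deriv_local[where g="\<lambda>z. z^2"]) (auto simp: P1_def P2_def intro!: derivative_eq_intros)
lemma dP1: "y \<noteq> 0 \<Longrightarrow> (P1 has_real_derivative P0 y) (at y)"
  by (rule deriv_local[where g="\<lambda>z. z"]) (auto simp: P1_def P0_def intro!: derivative_eq_intros)

lemma d_comb:
  assumes "\<And>k::real. k \<in> {-4,-3,-2,-1,1,2,3,4} \<Longrightarrow> (f has_real_derivative f' (x + k*r)) (at (x + k*r))"
  shows "((comb r f) has_real_derivative (comb r f' x)) (at x)"
proof -
  have D: "((\<lambda>x. f (x + k*r)) has_real_derivative f' (x + k*r)) (at x)" if "k \<in> {-4,-3,-2,-1,1,2,3,4}" for k
    using assms[OF that] DERIV_shift by blast
  have e: "(\<lambda>x. f (x + k*r)) = (\<lambda>x. f (x - (-k)*r))" for k by auto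
  show ?thesis unfolding comb_def[abs_def]
    using D[of 1] D[of "-1"] D[of 2] D[of "-2"] D[of 3] D[of "-3"] D[of 4] D[of "-4"]
    by (auto intro!: derivative_eq_intros simp: algebra_simps)
qed



lemma comb_left: assumes "r > 0" "x \<le> -4*r" "\<And>y. y \<le> 0 \<Longrightarrow> f y = 0"
  shows "comb r f x = 0"
  using assms by (simp add: comb_def)

lemma comb_P3_right: assumes "r > 0" "x \<ge> 4*r" shows "comb r P3 x = 0"
proof -
  have "comb r P3 x = 3*((x+r)^3 - (x-r)^3) - 8*((x+2*r)^3 - (x-2*r)^3) + 7*((x+3*r)^3 - (x-3*r)^3) - 2*((x+4*r)^3 - (x-4*r)^3)"
    using assms by (simp add: comb_def P3_def max_def)
  also have "\<dots> = 0" by (simp add: algebra_simps power3_eq_cube)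
  finally show ?thesis .
qed

lemma comb_P2_right: assumes "r > 0" "x \<ge> 4*r" shows "comb r P2 x = 0"
proof -
  have "comb r P2 x = 3*((x+r)^2 - (x-r)^2) - 8*((x+2*r)^2 - (x-2*r)^2) + 7*((x+3*r)^2 - (x-3*r)^2) - 2*((x+4*r)^2 - (x-4*r)^2)"
    using assms by (simp add: comb_def P2_def max_def)
  also have "\<dots> = 0" by (simp add: algebra_simps power2_eq_square)
  finally show ?thesis .
qed

lemma comb_P1_right: assumes "r > 0" "x \<ge> 4*r" shows "comb r P1 x = 0"
proof -
  have "comb r P1 x = 3*((x+r) - (x-r)) - 8*((x+2*r) - (x-2*r)) + 7*((x+3*r) - (x-3*r)) - 2*((x+4*r) - (x-4*r))"
    using assms by (simp add: comb_def P1_def max_def)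
  also have "\<dots> = 0" by (simp add: algebra_simps)
  finally show ?thesis .
qed

lemma comb_P3_mid: assumes "r > 0" "-r \<le> x" "x \<le> r" shows "comb r P3 x = 6*r^2*x"
proof -
  have "comb r P3 x = 3*(x+r)^3 - 8*(x+2*r)^3 + 7*(x+3*r)^3 - 2*(x+4*r)^3"
    using assms by (simp add: comb_def P3_def max_def)
  also have "\<dots> = 6*r^2*x" by (simp add: algebra_simps power3_eq_cube power2_eq_square)
  finally show ?thesis .
qed

lemma comb_bound: assumes "\<And>k::real. k \<in> {-4,-3,-2,-1,1,2,3,4} \<Longrightarrow> 0 \<le> f (x + k*r) \<and> f (x + k*r) \<le> M"
  shows "\<bar>comb r f x\<bar> \<le> 20 * M"
proof -
  have a: "0 \<le> f (x + k*r) \<and> f (x + k*r) \<le> M" if "k \<in> {-4,-3,-2,-1,1,2,3,4}" for k using assms that by blast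
  from a[of 1] a[of "-1"] a[of 2] a[of "-2"] a[of 3] a[of "-3"] a[of 4] a[of "-4"]
  show ?thesis unfolding comb_def by (simp add: algebra_simps abs_le_iff)
qed

lemma comb_P0_bound: "\<bar>comb r P0 x\<bar> \<le> 20"
  using comb_bound[of P0 x r 1] by (auto simp: P0_def)

lemma comb_P3_bound: assumes "r > 0" "\<bar>x\<bar> \<le> 4*r" shows "\<bar>comb r P3 x\<bar> \<le> 20 * (8*r)^3"
proof (rule comb_bound)
  fix k :: real assume k: "k \<in> {-4,-3,-2,-1,1,2,3,4}"
  have "\<bar>x + k*r\<bar> \<le> 8*r" using k assms by (auto simp: abs_le_iff)
  hence "max 0 (x + k*r) \<le> 8*r" using assms by auto
  hence "(max 0 (x + k*r))^3 \<le> (8*r)^3" by (intro power_mono) auto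
  then show "0 \<le> P3 (x + k * r) \<and> P3 (x + k * r) \<le> (8 * r) ^ 3" by (simp add: P3_def)
qed

lemma cont_P3: "continuous_on A P3" unfolding P3_def by (intro continuous_intros)
lemma cont_P2: "continuous_on A P2" unfolding P2_def by (intro continuous_intros)
lemma cont_P1: "continuous_on A P1" unfolding P1_def by (intro continuous_intros)

lemma cont_comb: assumes "\<And>A. continuous_on A f" shows "continuous_on A (comb r f)"
proof -
  have c: "continuous_on A (\<lambda>x. f (x + k))" for k
  proof -
    have "continuous_on A (\<lambda>x. x + k)" by (intro continuous_intros)
    then show ?thesis using continuous_on_compose[of A "\<lambda>x. x + k" f, OF _ assms] by (simp add: o_def)
  qed
  show ?thesis unfolding comb_def[abs_def] using c[of r] c[of "-r"] c[of "2*r"] c[of "-2*r"] c[of "3*r"] c[of "-3*r"] c[of "4*r"] c[of "-4*r"]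
    by (auto intro!: continuous_intros)
qed



lemma comb_scale: "comb r (\<lambda>y. c * f y) x = c * comb r f x"
  by (simp add: comb_def algebra_simps)

lemma knots: assumes "x \<notin> {-4*r,-3*r,-2*r,-r,r,2*r,3*r,4*r}" "k \<in> {-4,-3,-2,-1,1,2,3,4::real}"
  shows "x + k*r \<noteq> 0"
  using assms by (auto simp: algebra_simps)

lemma dC3: assumes "x \<notin> {-4*r,-3*r,-2*r,-r,r,2*r,3*r,4*r}" shows "(comb r P3 has_real_derivative 3 * comb r P2 x) (at x)"
  using d_comb[of P3 "\<lambda>y. 3 * P2 y" x r] dP3 knots[OF assms] by (simp add: comb_scale)
lemma dC2: assumes "x \<notin> {-4*r,-3*r,-2*r,-r,r,2*r,3*r,4*r}" shows "(comb r P2 has_real_derivative 2 * comb r P1 x) (at x)"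
  using d_comb[of P2 "\<lambda>y. 2 * P1 y" x r] dP2 knots[OF assms] by (simp add: comb_scale)
lemma dC1: assumes "x \<notin> {-4*r,-3*r,-2*r,-r,r,2*r,3*r,4*r}" shows "(comb r P1 has_real_derivative comb r P0 x) (at x)"
  using d_comb[of P1 P0 x r] dP1 knots[OF assms] by simp

lemma dE: "((\<lambda>x. exp (-(\<i> * complex_of_real (\<omega> * x)))) has_vector_derivative
     (-(\<i> * complex_of_real \<omega>)) * exp (-(\<i> * complex_of_real (\<omega> * x)))) (at x)"
proof -
  have "((\<lambda>z. exp (-(\<i> * complex_of_real \<omega> * z))) has_field_derivative
     (-(\<i> * complex_of_real \<omega>)) * exp (-(\<i> * complex_of_real \<omega> * complex_of_real x))) (at (of_real x))"
    by (auto intro!: derivative_eq_intros)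
  from has_vector_derivative_real_field[OF this] show ?thesis by (simp add: mult.assoc)
qed

lemma ftc:
  fixes r \<omega> :: real
  assumes r: "r > 0" and w: "\<omega> \<noteq> 0"
  shows "((\<lambda>x. exp(-(\<i> * of_real(\<omega>*x))) * (of_real(comb r P3 x/(6*r^2)) - \<i> / of_real(\<omega>^3) * of_real(comb r P0 x/r^2))) has_integral 0) {-4*r..4*r}"
proof -
  define E where "E x = exp(-(\<i> * complex_of_real(\<omega>*x)))" for x
  define u3 where "u3 x = complex_of_real (comb r P3 x/(6*r^2))" for x
  define u2 where "u2 x = complex_of_real (comb r P2 x/(2*r^2))" for x
  define u1 where "u1 x = complex_of_real (comb r P1 x/(r^2))" for x
  define u0 where "u0 x = complex_of_real (comb r P0 x/(r^2))" for x
  define a where "a = \<i> / complex_of_real \<omega>"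
  define b where "b = 1 / complex_of_real (\<omega>^2)"
  define c where "c = \<i> / complex_of_real (\<omega>^3)"
  have ha: "-(\<i>*complex_of_real \<omega>)*a = 1" using w by (simp add: a_def field_simps)
  have hb: "a - \<i>*complex_of_real \<omega>*b = 0" using w by (simp add: a_def b_def field_simps power2_eq_square)
  have hc: "b + \<i>*complex_of_real \<omega>*c = 0" using w by (simp add: c_def b_def field_simps power2_eq_square power3_eq_cube)
  define Q where "Q x = a * u3 x + b * u2 x - c * u1 x" for x
  let ?S = "{-4*r,-3*r,-2*r,-r,r,2*r,3*r,4*r}"
  have D: "((\<lambda>x. E x * Q x) has_vector_derivative (E x * (u3 x - c * u0 x))) (at x)"
    if x: "x \<notin> ?S" for x
  proof -
    have d3: "((\<lambda>x. comb r P3 x/(6*r^2)) has_real_derivative comb r P2 x/(2*r^2)) (at x)"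
      using DERIV_cdivide[OF dC3[OF x], of "6*r^2"] by simp
    have d2: "((\<lambda>x. comb r P2 x/(2*r^2)) has_real_derivative comb r P1 x/(r^2)) (at x)"
      using DERIV_cdivide[OF dC2[OF x], of "2*r^2"] using r by simp
    have d1: "((\<lambda>x. comb r P1 x/(r^2)) has_real_derivative comb r P0 x/(r^2)) (at x)"
      using DERIV_cdivide[OF dC1[OF x], of "r^2"] by simp
    have v3: "(u3 has_vector_derivative u2 x) (at x)" unfolding u3_def u2_def by (rule has_vector_derivative_of_real[OF d3])
    have v2: "(u2 has_vector_derivative u1 x) (at x)" unfolding u1_def u2_def by (rule has_vector_derivative_of_real[OF d2])
    have v1: "(u1 has_vector_derivative u0 x) (at x)" unfolding u1_def u0_def by (rule has_vector_derivative_of_real[OF d1])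
    have dQ: "(Q has_vector_derivative (a * u2 x + b * u1 x - c * u0 x)) (at x)"
      unfolding Q_def[abs_def]
      by (intro has_vector_derivative_diff has_vector_derivative_add has_vector_derivative_mult_right v1 v2 v3)
    have dE': "(E has_vector_derivative (-(\<i> * complex_of_real \<omega>)) * E x) (at x)"
      unfolding E_def[abs_def] by (rule dE)
    have "((\<lambda>x. E x * Q x) has_vector_derivative
      (E x * (a * u2 x + b * u1 x - c * u0 x) + (-(\<i> * complex_of_real \<omega>)) * E x * Q x)) (at x)"
      using has_vector_derivative_mult[OF dE' dQ] by (simp add: algebra_simps)
    moreover have "E x * (a * u2 x + b * u1 x - c * u0 x) + (-(\<i> * complex_of_real \<omega>)) * E x * Q x
       = E x * ((-(\<i>*complex_of_real \<omega>)*a) * u3 x + (a - \<i>*complex_of_real \<omega>*b) * u2 x + (b + \<i>*complex_of_real \<omega>*c) * u1 x - c * u0 x)"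
      unfolding Q_def by (simp add: algebra_simps)
    moreover have "E x * ((-(\<i>*complex_of_real \<omega>)*a) * u3 x + (a - \<i>*complex_of_real \<omega>*b) * u2 x + (b + \<i>*complex_of_real \<omega>*c) * u1 x - c * u0 x) = E x * (u3 x - c * u0 x)"
      unfolding ha hb hc by simp
    ultimately show ?thesis by metis
  qed
  have cont: "continuous_on {-4*r..4*r} (\<lambda>x. E x * Q x)"
    unfolding E_def Q_def u3_def u2_def u1_def
    using r by (intro continuous_intros cont_comb cont_P3 cont_P2 cont_P1) auto
  have Q0: "Q (4*r) = 0" "Q (-4*r) = 0"
    using r comb_P3_right[of r "4*r"] comb_P2_right[of r "4*r"] comb_P1_right[of r "4*r"]
      comb_left[of r "-4*r" P3] comb_left[of r "-4*r" P2] comb_left[of r "-4*r" P1]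
    by (auto simp: Q_def u3_def u2_def u1_def P3_def P2_def P1_def)
  have "((\<lambda>x. E x * (u3 x - c * u0 x)) has_integral (E (4*r) * Q (4*r) - E (-4*r) * Q (-4*r))) {-4*r..4*r}"
    by (rule fundamental_theorem_of_calculus_interior_strong[where S="?S"]) (use r D cont in auto)
  then show ?thesis using Q0 by (simp add: E_def u3_def u0_def c_def)
qed



lemma phi_int:
  fixes r C :: real assumes r: "0 < r" and C: "0 \<le> C"
  shows "(\<integral>\<^sup>+ \<omega>. ennreal (C * r / (1 + (r*\<omega>)^2)) \<partial>lborel) = ennreal (C * pi)"
proof -
  let ?f = "\<lambda>\<omega>::real. C * r / (1 + (r*\<omega>)^2)"
  have nz: "\<And>x. 1 + (r*x)^2 \<noteq> 0" by (metis add_pos_nonneg zero_less_one zero_le_power2 less_irrefl)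
  have D: "DERIV (\<lambda>x. C * arctan (r*x)) x :> ?f x" for x
    using nz[of x] by (auto intro!: derivative_eq_intros simp: field_simps power2_eq_square)
  have l1: "filterlim (\<lambda>x. r*x) at_top at_top"
    using r by (intro filterlim_tendsto_pos_mult_at_top[OF tendsto_const r filterlim_ident])
  have l2: "filterlim (\<lambda>x. r*x) at_bot at_bot"
    using r by (intro filterlim_tendsto_pos_mult_at_bot[OF tendsto_const r filterlim_ident])
  have lim1: "((\<lambda>x. C * arctan (r*x)) \<longlongrightarrow> C * (pi/2)) at_top"
    by (intro tendsto_mult tendsto_const filterlim_compose[OF tendsto_arctan_at_top l1])
  have lim2: "((\<lambda>x. C * arctan (r*x)) \<longlongrightarrow> C * (-(pi/2))) at_bot"
    by (intro tendsto_mult tendsto_const filterlim_compose[OF tendsto_arctan_at_bot l2])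
  have *: "set_integrable lborel (einterval (-\<infinity>) \<infinity>) ?f \<and> (LBINT x=-\<infinity>..\<infinity>. ?f x) = C * (pi/2) - C * (-(pi/2))"
    apply (intro conjI interval_integral_FTC_nonneg[where F="\<lambda>x. C * arctan (r*x)"])
    using D r C lim1 lim2 nz by (auto intro!: continuous_intros simp: ereal_tendsto_simps1 ereal_tendsto_simps2 add_pos_nonneg)
  have int: "integrable lborel ?f" using * by (simp add: einterval_eq_UNIV set_integrable_def)
  have "(LBINT x=-\<infinity>..\<infinity>. ?f x) = (LINT x|lborel. ?f x)"
    by (simp add: interval_lebesgue_integral_def einterval_eq_UNIV set_lebesgue_integral_def)
  with * have eq: "(LINT x|lborel. ?f x) = C * pi" by (simp add: algebra_simps)
  show ?thesis
    by (subst nn_integral_eq_integral[OF int]) (use r C eq in \<open>auto intro!: divide_nonneg_pos add_pos_nonneg\<close>)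
qed

lemma pw:
  fixes r \<omega> N :: real
  assumes r: "r \<ge> 1" and N: "N \<ge> 0" "N \<le> 16000 * r^2" "\<omega> \<noteq> 0 \<Longrightarrow> N \<le> 160 / (r * \<bar>\<omega>\<bar>^3)"
  shows "N \<le> (32000 * r) * r / (1 + (r*\<omega>)^2)" "\<bar>\<omega>\<bar> * N \<le> 32000 * r / (1 + (r*\<omega>)^2)"
proof -
  define t where "t = r * \<bar>\<omega>\<bar>"
  have t0: "t \<ge> 0" using r by (simp add: t_def)
  have sq: "(r*\<omega>)^2 = t^2" by (simp add: t_def power_mult_distrib)
  have pos: "1 + t^2 > 0" by (simp add: add_pos_nonneg)
  have "N * (1 + t^2) \<le> 32000 * r^2 \<and> \<bar>\<omega>\<bar> * N * (1 + t^2) \<le> 32000 * r"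
  proof (cases "t \<le> 1")
    case True
    have "t^2 \<le> 1" using True t0 by (simp add: power_le_one)
    hence a: "N * (1 + t^2) \<le> N * 2" using N by (intro mult_left_mono) auto
    have b: "\<bar>\<omega>\<bar> * N \<le> \<bar>\<omega>\<bar> * (16000 * r^2)" using N by (intro mult_left_mono) auto
    have "\<bar>\<omega>\<bar> * (16000 * r^2) = 16000 * r * t" by (simp add: t_def power2_eq_square)
    also have "\<dots> \<le> 16000 * r" using True r by simp
    finally have c: "\<bar>\<omega>\<bar> * N \<le> 16000 * r" using b by linarith
    have d: "\<bar>\<omega>\<bar> * N * (1 + t^2) \<le> \<bar>\<omega>\<bar> * N * 2" using \<open>t^2 \<le> 1\<close> N by (intro mult_left_mono) auto
    show ?thesis using a d c N by linarith
  next
    case False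
    hence w: "\<omega> \<noteq> 0" by (auto simp: t_def)
    have wpos: "\<bar>\<omega>\<bar> > 0" using w by simp
    have rpos: "r > 0" using r by simp
    have N2: "N * (r * \<bar>\<omega>\<bar>^3) \<le> 160" using N(3)[OF w] rpos wpos by (simp add: field_simps)
    have "1 + t^2 \<le> 2 * t^2" using False by (simp add: power2_eq_square) (smt (verit) mult_le_cancel_left1)
    hence a: "N * (1 + t^2) \<le> N * (2 * t^2)" using N by (intro mult_left_mono) auto
    have e1: "N * (2 * t^2) * \<bar>\<omega>\<bar> = 2 * r^2 * (N * (r * \<bar>\<omega>\<bar>^3)) / r" using rpos by (simp add: t_def power2_eq_square power3_eq_cube field_simps)
    have "N * (2 * t^2) * \<bar>\<omega>\<bar> \<le> 2 * r^2 * 160 / r" unfolding e1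
      using N2 rpos by (intro divide_right_mono mult_left_mono) auto
    also have "\<dots> = 320 * r" using rpos by (simp add: power2_eq_square)
    finally have b: "\<bar>\<omega>\<bar> * (N * (1 + t^2)) \<le> 320 * r" using a wpos
      by (smt (verit, best) mult.commute mult_left_mono)
    have "320 * r \<le> 32000 * r" using rpos by simp
    hence c: "\<bar>\<omega>\<bar> * N * (1 + t^2) \<le> 32000 * r" using b by (simp add: algebra_simps)
    have "r * (\<bar>\<omega>\<bar> * (N * (1 + t^2))) \<le> r * (320 * r)" using b rpos by (intro mult_left_mono) auto
    moreover have "N * (1 + t^2) * t = r * (\<bar>\<omega>\<bar> * (N * (1 + t^2)))" by (simp add: t_def algebra_simps)
    ultimately have "N * (1 + t^2) * t \<le> 320 * r * r" by (simp add: algebra_simps)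
    hence "N * (1 + t^2) \<le> 320 * r * r"
      using False N pos by (smt (verit) mult_le_cancel_left1 mult_nonneg_nonneg)
    moreover have "320 * r * r \<le> 32000 * r^2" using rpos by (simp add: power2_eq_square)
    ultimately have "N * (1 + t^2) \<le> 32000 * r^2" by linarith
    then show ?thesis using c by simp
  qed
  then show "N \<le> (32000 * r) * r / (1 + (r*\<omega>)^2)" "\<bar>\<omega>\<bar> * N \<le> 32000 * r / (1 + (r*\<omega>)^2)"
    unfolding sq using pos by (simp_all add: field_simps power2_eq_square)
qed



lemma h_props:
  fixes r :: real assumes r: "r \<ge> 1"
  defines "h \<equiv> \<lambda>x. comb r P3 x/(6*r^2)"
  shows "continuous_on UNIV h" "\<And>x. x \<notin> {-4*r..4*r} \<Longrightarrow> h x = 0"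
    "\<And>x. \<bar>x\<bar> \<le> 4*r \<Longrightarrow> \<bar>h x\<bar> \<le> 2000 * r" "\<And>x. x \<in> {-r..r} \<Longrightarrow> h x = x"
    "integrable lborel h"
proof -
  have rpos: "r > 0" using r by simp
  show c: "continuous_on UNIV h" unfolding h_def by (intro continuous_intros cont_comb cont_P3) (use rpos in auto)
  show z: "h x = 0" if "x \<notin> {-4*r..4*r}" for x
  proof (cases "x \<le> -4*r")
    case True then show ?thesis using comb_left[of r x P3] rpos by (simp add: h_def P3_def)
  next
    case False then show ?thesis using that comb_P3_right[of r x] rpos by (simp add: h_def)
  qed
  show "\<bar>h x\<bar> \<le> 2000 * r" if "\<bar>x\<bar> \<le> 4*r" for x
  proof -
    have "\<bar>comb r P3 x\<bar> \<le> 20 * (8*r)^3" by (rule comb_P3_bound) (use rpos that in auto)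
    also have "\<dots> \<le> 2000 * r * (6*r^2)" using rpos by (simp add: power3_eq_cube power2_eq_square)
    finally show ?thesis using rpos by (simp add: h_def abs_div field_simps)
  qed
  show "h x = x" if "x \<in> {-r..r}" for x
    using comb_P3_mid[of r x] that rpos by (simp add: h_def)
  have "integrable lborel (\<lambda>x. indicator {-4*r..4*r} x *\<^sub>R h x)"
    by (rule borel_integrable_compact) (use c in \<open>auto intro: continuous_on_subset\<close>)
  moreover have "(\<lambda>x. indicator {-4*r..4*r} x *\<^sub>R h x) = h"
    using z by (auto simp: fun_eq_iff indicator_def)
  ultimately show "integrable lborel h" by simp
qed



lemma fbound:
  fixes r \<omega> :: real assumes r: "r \<ge> 1"
  defines "h \<equiv> \<lambda>x. comb r P3 x/(6*r^2)"
  shows "norm (fourier h \<omega>) \<le> 16000 * r^2 \<and> (\<omega> \<noteq> 0 \<longrightarrow> norm (fourier h \<omega>) \<le> 160 / (r * \<bar>\<omega>\<bar>^3))"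
proof -
  have rpos: "r > 0" using r by simp
  note hp = h_props[OF r, folded h_def]
  define f where "f x = complex_of_real (h x) * exp (- (\<i> * complex_of_real (\<omega> * x)))" for x
  have normE: "norm (exp (- (\<i> * complex_of_real (\<omega> * x)))) = 1" for x
    by (simp add: norm_exp_eq_Re)
  have cf: "continuous_on UNIV f" unfolding f_def
    by (intro continuous_intros continuous_on_of_real hp(1) continuous_on_compose2[OF hp(1)]) auto
  have fint: "integrable lborel f"
    by (rule Bochner_Integration.integrable_bound[OF hp(5)]) (use cf normE in \<open>auto simp: f_def norm_mult intro: borel_measurable_continuous_onI\<close>)
  define L where "L = (LINT x|lborel. f x)"
  have "(f has_integral L) UNIV" unfolding L_def by (rule has_integral_integral_lborel[OF fint])
  moreover have "(\<lambda>x. if x \<in> {-4*r..4*r} then f x else 0) = f" using hp(2) by (auto simp: fun_eq_iff f_def h_def)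
  ultimately have fI: "(f has_integral L) {-4*r..4*r}" using has_integral_restrict_UNIV[of "{-4*r..4*r}" f L] by simp
  have F: "fourier h \<omega> = complex_of_real (1/(2*pi)) * L" by (simp add: fourier_def L_def f_def)
  have nF: "norm (fourier h \<omega>) \<le> norm L" unfolding F norm_mult
  proof -
    have "norm (complex_of_real (1/(2*pi))) \<le> 1" using pi_gt3 by (simp only: norm_of_real) simp
    then show "norm (complex_of_real (1/(2*pi))) * norm L \<le> norm L"
      by (metis mult_le_cancel_right1 norm_ge_zero mult.commute mult_right_le_one_le)
  qed
  have b1: "norm L \<le> 2000 * r * Henstock_Kurzweil_Integration.content {-4*r..4*r}"
  proof (rule has_integral_bound_real[OF _ _ fI, where S="{}"])
    fix x assume x: "x \<in> {-4*r..4*r} - {}"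
    have "norm (f x) = \<bar>h x\<bar>" unfolding f_def norm_mult normE norm_of_real by simp
    also have "\<dots> \<le> 2000 * r" using hp(3)[of x] x rpos by (auto simp: h_def abs_le_iff abs_div)
    finally show "norm (f x) \<le> 2000 * r" .
  qed (use rpos in auto)
  have "norm L \<le> 16000 * r^2" using b1 rpos by (simp add: power2_eq_square)
  moreover have "norm L \<le> 160 / (r * \<bar>\<omega>\<bar>^3)" if w: "\<omega> \<noteq> 0"
  proof -
    define c where "c = \<i> / complex_of_real (\<omega>^3)"
    have g: "((\<lambda>x. exp(-(\<i> * of_real(\<omega>*x))) * (of_real(comb r P3 x/(6*r^2)) - c * of_real(comb r P0 x/r^2))) has_integral 0) {-4*r..4*r}"
      using ftc[OF rpos w] unfolding c_def .
    have "((\<lambda>x. f x - exp(-(\<i> * of_real(\<omega>*x))) * (of_real(comb r P3 x/(6*r^2)) - c * of_real(comb r P0 x/r^2))) has_integral L - 0) {-4*r..4*r}"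
      by (rule has_integral_diff[OF fI g])
    moreover have "f x - exp(-(\<i> * of_real(\<omega>*x))) * (of_real(comb r P3 x/(6*r^2)) - c * of_real(comb r P0 x/r^2))
        = exp(-(\<i> * of_real(\<omega>*x))) * c * of_real(comb r P0 x/r^2)" for x
      by (simp add: f_def h_def algebra_simps)
    ultimately have gI: "((\<lambda>x. exp(-(\<i> * of_real(\<omega>*x))) * c * of_real(comb r P0 x/r^2)) has_integral L) {-4*r..4*r}" by simp
    have nc: "norm c = 1 / \<bar>\<omega>\<bar>^3" by (simp add: c_def norm_divide norm_power)
    have "norm L \<le> (20 / (r^2 * \<bar>\<omega>\<bar>^3)) * Henstock_Kurzweil_Integration.content {-4*r..4*r}"
    proof (rule has_integral_bound_real[OF _ _ gI, where S="{}"])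
      fix x
      have "norm (exp(-(\<i> * of_real(\<omega>*x))) * c * of_real(comb r P0 x/r^2)) = \<bar>comb r P0 x\<bar> / (r^2 * \<bar>\<omega>\<bar>^3)"
        unfolding norm_mult normE nc norm_of_real by (simp add: abs_div)
      also have "\<dots> \<le> 20 / (r^2 * \<bar>\<omega>\<bar>^3)" using w rpos comb_P0_bound[of r x] by (intro divide_right_mono) auto
      finally show "norm (exp(-(\<i> * of_real(\<omega>*x))) * c * of_real(comb r P0 x/r^2)) \<le> 20 / (r^2 * \<bar>\<omega>\<bar>^3)" .
    qed simp_all
    also have "\<dots> = 160 / (r * \<bar>\<omega>\<bar>^3)" using rpos by (simp add: power2_eq_square field_simps)
    finally show ?thesis .
  qed
  ultimately show ?thesis using nF by auto
qed



theorem propositionF5: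
  shows "\<exists>A::real. A > 0 \<and> (\<forall>r::real. r \<ge> 1 \<longrightarrow>
    (\<exists>h::real \<Rightarrow> real. integrable lborel h \<and> (\<forall>x\<in>{-r..r}. h x = x) \<and>
       (\<integral>\<^sup>+ \<omega>. ennreal (norm (fourier h \<omega>)) \<partial>lborel) \<le> ennreal (A * r powr (3/2)) \<and>
       (\<integral>\<^sup>+ \<omega>. ennreal (\<bar>\<omega>\<bar> * norm (fourier h \<omega>)) \<partial>lborel) \<le> ennreal (A * r powr (1/2))))"
proof (intro exI[of _ "32000 * pi"] conjI allI impI)
  show "0 < 32000 * pi" by simp
  fix r :: real assume r: "r \<ge> 1"
  hence rpos: "r > 0" by simp
  define h where "h = (\<lambda>x. comb r P3 x/(6*r^2))"
  note hp = h_props[OF r, folded h_def]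
  have pwb: "norm (fourier h \<omega>) \<le> (32000 * r) * r / (1 + (r*\<omega>)^2) \<and> \<bar>\<omega>\<bar> * norm (fourier h \<omega>) \<le> 32000 * r / (1 + (r*\<omega>)^2)" for \<omega>
    using fbound[OF r, of \<omega>, folded h_def] pw[OF r, of "norm (fourier h \<omega>)" \<omega>] by auto
  show "\<exists>h::real \<Rightarrow> real. integrable lborel h \<and> (\<forall>x\<in>{-r..r}. h x = x) \<and>
       (\<integral>\<^sup>+ \<omega>. ennreal (norm (fourier h \<omega>)) \<partial>lborel) \<le> ennreal (32000 * pi * r powr (3/2)) \<and>
       (\<integral>\<^sup>+ \<omega>. ennreal (\<bar>\<omega>\<bar> * norm (fourier h \<omega>)) \<partial>lborel) \<le> ennreal (32000 * pi * r powr (1/2))"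
  proof (intro exI[of _ h] conjI ballI)
    show "integrable lborel h" by (rule hp(5))
    show "h x = x" if "x \<in> {-r..r}" for x using hp(4) that by (simp add: h_def)
    have "(\<integral>\<^sup>+ \<omega>. ennreal (norm (fourier h \<omega>)) \<partial>lborel) \<le> (\<integral>\<^sup>+ \<omega>. ennreal ((32000 * r) * r / (1 + (r*\<omega>)^2)) \<partial>lborel)"
      by (intro nn_integral_mono ennreal_leI) (use pwb in blast)
    also have "\<dots> = ennreal ((32000 * r) * pi)" by (rule phi_int) (use rpos in auto)
    also have "\<dots> \<le> ennreal (32000 * pi * r powr (3/2))"
    proof (intro ennreal_leI)
      have "r = r powr 1" using rpos by simp
      also have "\<dots> \<le> r powr (3/2)" using r by (intro powr_mono) auto
      finally show "32000 * r * pi \<le> 32000 * pi * r powr (3/2)" by simp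
    qed
    finally show "(\<integral>\<^sup>+ \<omega>. ennreal (norm (fourier h \<omega>)) \<partial>lborel) \<le> ennreal (32000 * pi * r powr (3/2))" .
    have "(\<integral>\<^sup>+ \<omega>. ennreal (\<bar>\<omega>\<bar> * norm (fourier h \<omega>)) \<partial>lborel) \<le> (\<integral>\<^sup>+ \<omega>. ennreal (32000 * r / (1 + (r*\<omega>)^2)) \<partial>lborel)"
      by (intro nn_integral_mono ennreal_leI) (use pwb in blast)
    also have "\<dots> = ennreal (32000 * pi)" by (rule phi_int) (use rpos in auto)
    also have "\<dots> \<le> ennreal (32000 * pi * r powr (1/2))"
    proof (intro ennreal_leI)
      have "1 \<le> r powr (1/2)" using r by (intro ge_one_powr_ge_zero) auto
      then show "32000 * pi \<le> 32000 * pi * r powr (1/2)" by simp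
    qed
    finally show "(\<integral>\<^sup>+ \<omega>. ennreal (\<bar>\<omega>\<bar> * norm (fourier h \<omega>)) \<partial>lborel) \<le> ennreal (32000 * pi * r powr (1/2))" .
  qed
qed

end
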